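(* Let $\phi:\mathbb{R}\to\mathbb{R}$ be differentiable, $x\in\mathbb{R}^{k_0}$ with $\|x\|_2=1$, and $a,b\in\mathbb{R}^k$ with $a^T\phi(b)=1$, and let $f(z)=xa^T\phi(bx^Tz)$ (so $f(x)=x$). Then $\lambda_1(\mathbf{J}(f(x)))=a^T(\phi'(b)\odot b)$.
   Context: $\phi,\phi'$ are applied coordinatewise; $\odot$ is the Hadamard (coordinatewise) product. $\mathbf{J}(f(x))$ is the Jacobian of $f$ at $x$ and $\lambda_1$ its top eigenvalue (eigenvalue of largest absolute value). In the paper this setting arises as the trained weights $A^{(\infty)}=xa^T$, $B^{(\infty)}=bx^T$ of a 1-hidden-layer autoencoder $A\phi(Bz)$ trained to zero error on the single example $x$. *)

theory Defs
  imports "HOL-Analysis.Analysis"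
begin

definition jacobian :: "(real^'n \<Rightarrow> real^'m) \<Rightarrow> real^'n \<Rightarrow> real^'n^'m" where
  "jacobian f x = matrix (frechet_derivative f (at x))"

definition cmat :: "real^'n^'n \<Rightarrow> complex^'n^'n" where
  "cmat M = (\<chi> i j. complex_of_real (M $ i $ j))"

definition is_eigenvalue :: "real^'n^'n \<Rightarrow> complex \<Rightarrow> bool" where
  "is_eigenvalue M c \<longleftrightarrow> (\<exists>v. v \<noteq> 0 \<and> cmat M *v v = c *s v)"

definition is_top_eigenvalue :: "real^'n^'n \<Rightarrow> complex \<Rightarrow> bool" where
  "is_top_eigenvalue M c \<longleftrightarrow> is_eigenvalue M c \<and> (\<forall>\<mu>. is_eigenvalue M \<mu> \<longrightarrow> cmod \<mu> \<le> cmod c)"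

end

theory Submission
  imports Defs
begin

lemma g_deriv:
  fixes \<phi> :: "real \<Rightarrow> real" and a b :: "real^'k"
  assumes "\<forall>t. \<phi> differentiable (at t)"
  shows "((\<lambda>t. a \<bullet> (\<chi> i. \<phi> (t * b $ i))) has_real_derivative
          (a \<bullet> (\<chi> i. deriv \<phi> (t * b $ i) * b $ i))) (at t)"
proof -
  have d: "\<And>s. (\<phi> has_real_derivative deriv \<phi> s) (at s)"
    using assms DERIV_deriv_iff_real_differentiable by blast
  have "\<And>i. ((\<lambda>t. a $ i * \<phi> (t * b $ i)) has_real_derivative a $ i * (deriv \<phi> (t * b $ i) * b $ i)) (at t)"
    apply (rule DERIV_cmult)
    apply (rule DERIV_chain2[OF d])
    by (auto intro!: derivative_eq_intros)
  then have "((\<lambda>t. \<Sum>i\<in>UNIV. a $ i * \<phi> (t * b $ i)) has_real_derivative (\<Sum>i\<in>UNIV. a $ i * (deriv \<phi> (t * b $ i) * b $ i))) (at t)"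
    by (intro DERIV_sum) auto
  then show ?thesis by (simp add: inner_vec_def)
qed

theorem proposition4:
  fixes \<phi> :: "real \<Rightarrow> real" and x :: "real^'k0" and a b :: "real^'k"
    and f :: "real^'k0 \<Rightarrow> real^'k0"
  assumes "\<forall>t. \<phi> differentiable (at t)"
    and "norm x = 1"
    and "a \<bullet> (\<chi> i. \<phi> (b $ i)) = 1"
    and "f = (\<lambda>z. (a \<bullet> (\<chi> i. \<phi> (((x \<bullet> z) *\<^sub>R b) $ i))) *\<^sub>R x)"
  shows "is_top_eigenvalue (jacobian f x)
           (complex_of_real (a \<bullet> (\<chi> i. deriv \<phi> (b $ i) * b $ i)))"
proof -
  define c where "c = a \<bullet> (\<chi> i. deriv \<phi> (b $ i) * b $ i)"
  define g where "g = (\<lambda>t. a \<bullet> (\<chi> i. \<phi> (t * b $ i)))"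
  have xx: "x \<bullet> x = 1" using assms(2) by (metis power2_norm_eq_inner power_one)
  have fg: "f = (\<lambda>z. g (x \<bullet> z) *\<^sub>R x)" unfolding assms(4) g_def by simp
  have gd: "(g has_real_derivative c) (at (x \<bullet> x))"
    using g_deriv[OF assms(1), of a b 1] unfolding g_def c_def xx by simp
  have "((\<lambda>z. x \<bullet> z) has_derivative (\<lambda>h. x \<bullet> h)) (at x)"
    by (rule bounded_linear.has_derivative[OF bounded_linear_inner_right]) (rule has_derivative_ident)
  then have "((\<lambda>z. g (x \<bullet> z)) has_derivative (\<lambda>h. c * (x \<bullet> h))) (at x)"
    using gd[unfolded has_field_derivative_def] diff_chain_at[of "\<lambda>z. x \<bullet> z" _ x g]
    by (auto simp: o_def mult.commute)
  then have fd: "(f has_derivative (\<lambda>h. (c * (x \<bullet> h)) *\<^sub>R x)) (at x)"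
    unfolding fg by (intro derivative_eq_intros) auto
  have J: "jacobian f x = (\<chi> i j. c * x $ j * x $ i)"
    unfolding jacobian_def frechet_derivative_at[OF fd, symmetric] matrix_def
    by (simp add: inner_axis)
  have Jv: "cmat (jacobian f x) *v v = (\<chi> i. complex_of_real (c * x $ i) * (\<Sum>j\<in>UNIV. complex_of_real (x $ j) * v $ j))"
    for v :: "complex^'k0"
    unfolding J cmat_def matrix_vector_mult_def
    by (auto simp: vec_eq_iff sum_distrib_left intro!: sum.cong)
  define xc where "xc = (\<chi> i. complex_of_real (x $ i))"
  have s1: "(\<Sum>j\<in>UNIV. complex_of_real (x $ j) * xc $ j) = 1"
  proof -
    have "(\<Sum>j\<in>UNIV. complex_of_real (x $ j) * xc $ j) = complex_of_real (\<Sum>j\<in>UNIV. x $ j * x $ j)"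
      unfolding xc_def by simp
    also have "(\<Sum>j\<in>UNIV. x $ j * x $ j) = 1" using xx by (simp add: inner_vec_def)
    finally show ?thesis by simp
  qed
  have xc0: "xc \<noteq> 0"
  proof
    assume "xc = 0"
    then have "(\<Sum>j\<in>UNIV. complex_of_real (x $ j) * xc $ j) = 0" by simp
    with s1 show False by simp
  qed
  have ev: "is_eigenvalue (jacobian f x) (complex_of_real c)"
    unfolding is_eigenvalue_def
  proof (intro exI conjI)
    show "xc \<noteq> 0" by (rule xc0)
    have "cmat (jacobian f x) *v xc = (\<chi> i. complex_of_real (c * x $ i) * 1)"
      unfolding Jv s1 ..
    also have "\<dots> = complex_of_real c *s xc"
      unfolding xc_def by (simp add: vec_eq_iff)
    finally show "cmat (jacobian f x) *v xc = complex_of_real c *s xc" .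
  qed
  have bound: "cmod \<mu> \<le> cmod (complex_of_real c)" if ev\<mu>: "is_eigenvalue (jacobian f x) \<mu>" for \<mu>
  proof -
    obtain v where v0: "v \<noteq> 0" and ve: "cmat (jacobian f x) *v v = \<mu> *s v"
      using ev\<mu> unfolding is_eigenvalue_def by blast
    define s where "s = (\<Sum>j\<in>UNIV. complex_of_real (x $ j) * v $ j)"
    have comp: "complex_of_real (c * x $ i) * s = \<mu> * v $ i" for i
    proof -
      have "(cmat (jacobian f x) *v v) $ i = (\<mu> *s v) $ i" using ve by simp
      then show ?thesis unfolding Jv s_def by simp
    qed
    show ?thesis
    proof (cases "s = 0")
      case True
      have "\<mu> * v $ i = 0" for i using comp[of i] True by simp
      moreover obtain i where "v $ i \<noteq> 0" using v0 by (auto simp: vec_eq_iff)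
      ultimately have "\<mu> = 0" by auto
      then show ?thesis by simp
    next
      case False
      have L: "(\<Sum>i\<in>UNIV. complex_of_real (x $ i) * (complex_of_real (c * x $ i) * s))
            = (\<Sum>i\<in>UNIV. complex_of_real (x $ i) * (\<mu> * v $ i))"
        using comp by simp
      have L1: "(\<Sum>i\<in>UNIV. complex_of_real (x $ i) * (complex_of_real (c * x $ i) * s))
            = (\<Sum>i\<in>UNIV. (complex_of_real c * s) * complex_of_real (x $ i * x $ i))"
        by (rule sum.cong) (simp_all add: mult_ac)
      have L2: "(\<Sum>i\<in>UNIV. (complex_of_real c * s) * complex_of_real (x $ i * x $ i))
            = complex_of_real c * s * complex_of_real (\<Sum>i\<in>UNIV. x $ i * x $ i)"
        by (simp only: sum_distrib_left of_real_sum)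
      have R: "(\<Sum>i\<in>UNIV. complex_of_real (x $ i) * (\<mu> * v $ i)) = \<mu> * s"
        unfolding s_def sum_distrib_left by (rule sum.cong) (simp_all add: mult_ac)
      have "complex_of_real c * s * complex_of_real (\<Sum>i\<in>UNIV. x $ i * x $ i) = \<mu> * s"
        using trans[OF trans[OF L2[symmetric] L1[symmetric]] trans[OF L R]] .
      moreover have "(\<Sum>i\<in>UNIV. x $ i * x $ i) = 1" using xx by (simp add: inner_vec_def)
      ultimately have "complex_of_real c * s = \<mu> * s" by simp
      then have "\<mu> = complex_of_real c" using False by simp
      then show ?thesis by simp
    qed
  qed
  show ?thesis unfolding is_top_eigenvalue_def c_def[symmetric] using ev bound by blast
qed

end
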